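(* Let $\Theta = \{\theta_1, \ldots, \theta_n\}$ be a set of positive rational numbers, and suppose $\Theta \subset [a_1; b_1] \cup \ldots \cup [a_m; b_m]$ with $0 < a_i \leq b_i$. Let $F$ be a non-zero function defined by \[ F(x) = \sum_{\theta \in \Theta} a_{\theta}\cos(2\pi \theta x) + b_{\theta}\sin(2\pi \theta x), \quad a_\theta, b_\theta \in \mathbb{R}. \] Then \[ \min(\rho_+(F), \rho_-(F)) \geq \frac{1}{1 + \frac{b_1}{a_1}} \cdots \frac{1}{1 + \frac{b_m}{a_m}}. \]
   Context: Such an $F$ is continuous and periodic. For a continuous periodic function $F\colon \mathbb{R} \to \mathbb{R}$ with period $P > 0$, $\rho_+(F) = \lambda(\{x \in [0,P] : F(x) > 0\})/P$ and $\rho_-(F) = \lambda(\{x \in [0,P] : F(x) < 0\})/P$, where $\lambda$ is Lebesgue measure on $\mathbb{R}$ (these do not depend on the choice of period). *)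

theory Defs
  imports "HOL-Analysis.Analysis"
begin

definition is_period :: "(real \<Rightarrow> real) \<Rightarrow> real \<Rightarrow> bool" where
  "is_period F P \<longleftrightarrow> P > 0 \<and> (\<forall>x. F (x + P) = F x)"

(* a (chosen) positive period; the densities below do not depend on the choice *)
definition some_period :: "(real \<Rightarrow> real) \<Rightarrow> real" where
  "some_period F = (SOME P. is_period F P)"

definition rho_plus :: "(real \<Rightarrow> real) \<Rightarrow> real" where
  "rho_plus F = measure lebesgue {x \<in> {0..some_period F}. F x > 0} / some_period F"

definition rho_minus :: "(real \<Rightarrow> real) \<Rightarrow> real" where
  "rho_minus F = measure lebesgue {x \<in> {0..some_period F}. F x < 0} / some_period F"

end

theory Submission
  imports Defs "HOL-Complex_Analysis.Complex_Analysis"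
begin


lemma nontrivial_solution:
  fixes v :: "'k \<Rightarrow> 's \<Rightarrow> 'a::field"
  assumes "finite K" "finite S" "card S < card K"
  shows "\<exists>c. (\<exists>k\<in>K. c k \<noteq> 0) \<and> (\<forall>s\<in>S. (\<Sum>k\<in>K. c k * v k s) = 0)"
  using assms(2,1,3)
proof (induction S arbitrary: K v rule: finite_induct)
  case empty
  then obtain k0 where "k0 \<in> K" by (metis card.empty card_gt_0_iff equals0I)
  then show ?case by (intro exI[of _ "\<lambda>k. if k = k0 then 1 else 0"]) auto
next
  case (insert s0 S)
  show ?case
  proof (cases "\<forall>k\<in>K. v k s0 = 0")
    case True
    have "card S < card K" using insert by simp
    from insert.IH[OF insert.prems(1) this, of v] obtain c where
      c: "\<exists>k\<in>K. c k \<noteq> 0" "\<forall>s\<in>S. (\<Sum>k\<in>K. c k * v k s) = 0" by blast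
    then show ?thesis using True by (intro exI[of _ c]) auto
  next
    case False
    then obtain k0 where k0: "k0 \<in> K" "v k0 s0 \<noteq> 0" by blast
    define K' where "K' = K - {k0}"
    have fK': "finite K'" using insert.prems K'_def by auto
    have cK': "card S < card K'" using insert k0 K'_def by auto
    define v' where "v' k s = v k s - v k s0 / v k0 s0 * v k0 s" for k s
    from insert.IH[OF fK' cK', of v'] obtain c' where
      c': "\<exists>k\<in>K'. c' k \<noteq> 0" "\<forall>s\<in>S. (\<Sum>k\<in>K'. c' k * v' k s) = 0" by blast
    define c where "c k = (if k = k0 then - (\<Sum>k\<in>K'. c' k * v k s0) / v k0 s0 else c' k)" for k
    have split: "(\<Sum>k\<in>K. c k * v k s) = c k0 * v k0 s + (\<Sum>k\<in>K'. c' k * v k s)" for s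
    proof -
      have "(\<Sum>k\<in>K. c k * v k s) = c k0 * v k0 s + (\<Sum>k\<in>K'. c k * v k s)"
        using k0 insert.prems(1) K'_def by (simp add: sum.remove)
      also have "(\<Sum>k\<in>K'. c k * v k s) = (\<Sum>k\<in>K'. c' k * v k s)"
        by (rule sum.cong) (auto simp: c_def K'_def)
      finally show ?thesis .
    qed
    have "\<forall>s\<in>insert s0 S. (\<Sum>k\<in>K. c k * v k s) = 0"
    proof
      fix s assume s: "s \<in> insert s0 S"
      show "(\<Sum>k\<in>K. c k * v k s) = 0"
      proof (cases "s = s0")
        case True
        then show ?thesis using k0 unfolding split by (simp add: c_def)
      next
        case False
        then have "s \<in> S" using s by auto
        then have "(\<Sum>k\<in>K'. c' k * v' k s) = 0" using c' by auto
        then have "(\<Sum>k\<in>K'. c' k * v k s) - (\<Sum>k\<in>K'. c' k * v k s0) / v k0 s0 * v k0 s = 0"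
          by (simp add: v'_def algebra_simps sum_subtractf sum_distrib_left sum_distrib_right sum_divide_distrib)
        then show ?thesis using k0 unfolding split by (simp add: c_def algebra_simps)
      qed
    qed
    moreover have "\<exists>k\<in>K. c k \<noteq> 0" using c' by (auto simp: c_def K'_def)
    ultimately show ?thesis by blast
  qed
qed



lemma cis_sum_zero:
  fixes r :: int and N :: nat
  assumes "N > 0" "\<not> (int N dvd r)"
  shows "(\<Sum>n<N. cis (2*pi*r*n/N)) = 0"
proof -
  define z where "z = cis (2*pi*r/N)"
  have zn: "cis (2*pi*r*n/N) = z ^ n" for n :: nat
  proof -
    have "z ^ n = cis (real n * (2*pi*r/N))" unfolding z_def by (rule Complex.DeMoivre)
    then show ?thesis by (simp add: field_simps)
  qed
  have zN: "z ^ N = 1" using assms(1)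
    by (simp add: z_def Complex.DeMoivre)
  have "z \<noteq> 1"
  proof
    assume "z = 1"
    then have "exp (\<i> * complex_of_real (2*pi*r/N)) = 1" by (simp add: z_def cis_conv_exp)
    then obtain j :: int where "Im (\<i> * complex_of_real (2*pi*r/N)) = 2*pi*j"
      by (auto simp: exp_eq_1)
    then have "2*pi*r/N = 2*pi*j" by simp
    then have "real_of_int r = real N * j" using assms(1) by (simp add: field_simps)
    then have "r = int N * j" by (metis of_int_eq_iff of_int_mult of_int_of_nat_eq)
    then show False using assms(2) by simp
  qed
  have "(\<Sum>n<N. cis (2*pi*r*n/N)) = (\<Sum>n<N. z ^ n)" by (simp add: zn)
  also have "\<dots> = 0" using \<open>z \<noteq> 1\<close> zN by (simp add: sum_gp_strict)
  finally show ?thesis .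
qed

definition EE :: "(nat \<Rightarrow> nat) \<Rightarrow> nat \<Rightarrow> (nat \<Rightarrow> int) \<Rightarrow> (nat \<Rightarrow> nat) \<Rightarrow> complex" where
  "EE N m k n = (\<Prod>i<m. cis (2*pi*k i * n i / N i))"

lemma sum_PiE_prod:
  fixes f :: "nat \<Rightarrow> nat \<Rightarrow> 'a::comm_semiring_1"
  shows
  "(\<Sum>n\<in>PiE {..<m} (\<lambda>i. {..<N i}). \<Prod>i<m. f i (n i)) = (\<Prod>i<m. \<Sum>j<N i. f i j)"
  using prod_sum_PiE[of "{..<m}" "\<lambda>i. {..<N i}" f] by simp

lemma sum_EE_shift:
  fixes r :: "nat \<Rightarrow> int"
  assumes "i0 < m" "N i0 > 0" "\<not> int (N i0) dvd r i0"
  shows "(\<Sum>n\<in>PiE {..<m} (\<lambda>i. {..<N i}). EE N m r n) = 0"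
proof -
  have "(\<Sum>n\<in>PiE {..<m} (\<lambda>i. {..<N i}). EE N m r n) = (\<Prod>i<m. \<Sum>j<N i. cis (2*pi*r i * j / N i))"
    unfolding EE_def by (rule sum_PiE_prod)
  also have "\<dots> = 0"
    using assms cis_sum_zero[of "N i0" "r i0"] by (intro prod_zero) auto
  finally show ?thesis .
qed

lemma EE_mult_cnj:
  "EE N m k n * cnj (EE N m k' n) = EE N m (\<lambda>i. k i - k' i) n"
  unfolding EE_def cnj_prod prod.distrib[symmetric] cis_cnj cis_mult
  by (intro prod.cong refl) (simp add: field_simps diff_divide_distrib)



lemma EE_zero: "EE N m (\<lambda>i. 0) n = 1"
  by (simp add: EE_def)

lemma EE_orth:
  assumes dN: "\<forall>i<m. d i \<le> N i \<and> 0 < N i"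
    and k: "k \<in> PiE {..<m} (\<lambda>i. {..<d i})" and k': "k' \<in> PiE {..<m} (\<lambda>i. {..<d i})"
  shows "(\<Sum>n\<in>PiE {..<m} (\<lambda>i. {..<N i}). EE N m (\<lambda>i. int (k i)) n * cnj (EE N m (\<lambda>i. int (k' i)) n))
     = (if k = k' then of_nat (\<Prod>i<m. N i) else 0)"
proof (cases "k = k'")
  case True
  then show ?thesis
    by (simp add: EE_mult_cnj EE_zero card_PiE)
next
  case False
  then obtain i where i: "i < m" "k i \<noteq> k' i"
    using k k' by (metis PiE_ext lessThan_iff)
  have ki: "k i < d i" "k' i < d i" using k k' i by auto
  have nd: "\<not> int (N i) dvd (int (k i) - int (k' i))"
  proof
    assume h: "int (N i) dvd (int (k i) - int (k' i))"
    have "int (k i) - int (k' i) \<noteq> 0" using i by simp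
    from dvd_imp_le_int[OF this h] have "int (N i) \<le> \<bar>int (k i) - int (k' i)\<bar>" by simp
    then show False using ki dN i by auto
  qed
  show ?thesis using False sum_EE_shift[of i m N "\<lambda>j. int (k j) - int (k' j)"] i(1) nd dN
    by (simp add: EE_mult_cnj)
qed

lemma core:
  fixes g :: "(nat \<Rightarrow> nat) \<Rightarrow> real"
  assumes dN: "\<forall>i<m. 0 < d i \<and> d i \<le> N i"
    and orth: "\<forall>k\<in>PiE {..<m} (\<lambda>i. {..<d i}). \<forall>k'\<in>PiE {..<m} (\<lambda>i. {..<d i}).
       (\<Sum>n\<in>PiE {..<m} (\<lambda>i. {..<N i}). complex_of_real (g n) *
          (EE N m (\<lambda>i. int (k i)) n * cnj (EE N m (\<lambda>i. int (k' i)) n))) = 0"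
    and nz: "\<forall>n\<in>PiE {..<m} (\<lambda>i. {..<N i}). g n \<noteq> 0"
  shows "(\<Prod>i<m. d i) \<le> card {n\<in>PiE {..<m} (\<lambda>i. {..<N i}). g n > 0}"
proof (rule ccontr)
  define I where "I = PiE {..<m} (\<lambda>i. {..<N i})"
  define K where "K = PiE {..<m} (\<lambda>i. {..<d i})"
  define S where "S = {n\<in>I. g n > 0}"
  define E where "E k n = EE N m (\<lambda>i. int (k i)) n" for k n
  assume "\<not> (\<Prod>i<m. d i) \<le> card {n\<in>PiE {..<m} (\<lambda>i. {..<N i}). g n > 0}"
  then have lt: "card S < card K" by (simp add: S_def I_def K_def card_PiE)
  have fI: "finite I" and fK: "finite K" by (auto simp: I_def K_def intro!: finite_PiE)
  have fS: "finite S" using fI by (simp add: S_def)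
  obtain c where c: "\<exists>k\<in>K. c k \<noteq> 0" "\<forall>s\<in>S. (\<Sum>k\<in>K. c k * E k s) = (0::complex)"
    using nontrivial_solution[OF fK fS lt, of E] by blast
  define p where "p n = (\<Sum>k\<in>K. c k * E k n)" for n
  have pS: "p n = 0" if "n \<in> S" for n using c(2) that by (simp add: p_def)
  have "(\<Sum>n\<in>I. complex_of_real (g n) * (p n * cnj (p n))) =
        (\<Sum>n\<in>I. \<Sum>k\<in>K. \<Sum>k'\<in>K. c k * cnj (c k') * (complex_of_real (g n) * (E k n * cnj (E k' n))))"
    apply (simp add: p_def sum_distrib_left sum_distrib_right mult_ac)
    apply (rule sum.cong[OF refl])
    apply (subst sum.swap)
    apply (simp add: mult_ac)
    done
  also have "\<dots> = (\<Sum>k\<in>K. \<Sum>k'\<in>K. c k * cnj (c k') * (\<Sum>n\<in>I. complex_of_real (g n) * (E k n * cnj (E k' n))))"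
    by (simp add: sum_distrib_left sum.swap[of _ I])
  also have "\<dots> = 0"
    using orth by (simp add: K_def I_def E_def)
  finally have "(\<Sum>n\<in>I. complex_of_real (g n) * (p n * cnj (p n))) = 0" .
  moreover have "p n * cnj (p n) = complex_of_real ((cmod (p n))\<^sup>2)" for n
    by (rule complex_norm_square[symmetric])
  ultimately have "complex_of_real (\<Sum>n\<in>I. g n * (cmod (p n))\<^sup>2) = 0"
    by (simp only: of_real_sum of_real_mult)
  then have sum0: "(\<Sum>n\<in>I. g n * (cmod (p n))\<^sup>2) = 0" by (simp only: of_real_eq_0_iff)
  have nonpos: "\<forall>n\<in>I. g n * (cmod (p n))\<^sup>2 \<le> 0"
  proof
    fix n assume n: "n \<in> I"
    show "g n * (cmod (p n))\<^sup>2 \<le> 0"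
    proof (cases "g n > 0")
      case True then show ?thesis using pS n by (simp add: S_def)
    next
      case False then show ?thesis by (simp add: mult_nonpos_nonneg)
    qed
  qed
  have "\<forall>n\<in>I. g n * (cmod (p n))\<^sup>2 = 0"
  proof -
    have "(\<Sum>n\<in>I. - (g n * (cmod (p n))\<^sup>2)) = 0" using sum0 by (simp add: sum_negf)
    then have "\<forall>n\<in>I. - (g n * (cmod (p n))\<^sup>2) = 0"
      using sum_nonneg_eq_0_iff[OF fI, of "\<lambda>n. - (g n * (cmod (p n))\<^sup>2)"] nonpos by simp
    then show ?thesis by simp
  qed
  then have p0: "\<forall>n\<in>I. p n = 0" using nz by (simp add: I_def)
  obtain k0 where k0: "k0 \<in> K" "c k0 \<noteq> 0" using c(1) by blast
  have "0 = (\<Sum>n\<in>I. p n * cnj (E k0 n))" using p0 by simp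
  also have "\<dots> = (\<Sum>k\<in>K. c k * (\<Sum>n\<in>I. E k n * cnj (E k0 n)))"
    by (simp add: p_def sum_distrib_left sum_distrib_right sum.swap[of _ I] mult_ac)
  also have "\<dots> = (\<Sum>k\<in>K. c k * (if k = k0 then of_nat (\<Prod>i<m. N i) else 0))"
  proof (rule sum.cong[OF refl])
    fix k assume k: "k \<in> K"
    have dN': "\<forall>i<m. d i \<le> N i \<and> 0 < N i" using dN by auto
    show "c k * (\<Sum>n\<in>I. E k n * cnj (E k0 n)) = c k * (if k = k0 then of_nat (\<Prod>i<m. N i) else 0)"
      using EE_orth[OF dN', of k k0] k k0(1) by (simp add: K_def I_def E_def)
  qed
  also have "\<dots> = c k0 * of_nat (\<Prod>i<m. N i)"
    using k0(1) fK by (simp add: if_distrib sum.delta cong: if_cong)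
  finally have "c k0 * of_nat (\<Prod>i<m. N i) = 0" by simp
  moreover have "(\<Prod>i<m. N i) \<noteq> 0" using dN by (auto dest: less_le_trans)
  ultimately show False using k0(2) by simp
qed



lemma cis_sum: "cis (\<Sum>i\<in>A. f i) = (\<Prod>i\<in>A. cis (f i))"
  by (induction A rule: infinite_finite_induct) (auto simp: cis_mult[symmetric])

lemma EE_add: "EE N m (\<lambda>i. a i + r i) n = EE N m a n * EE N m r n"
  unfolding EE_def prod.distrib[symmetric] cis_mult
  by (intro prod.cong refl) (simp add: field_simps add_divide_distrib)

lemma EE_const: "EE N m (\<lambda>i. c) n = cis (\<Sum>i<m. 2*pi*c*n i/N i)"
  unfolding EE_def cis_sum by simp

lemma cos_sin_cis:
  "complex_of_real (A * cos w + B * sin w) =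
     (complex_of_real A - \<i> * complex_of_real B) / 2 * cis w + (complex_of_real A + \<i> * complex_of_real B) / 2 * cis (-w)"
  by (simp add: complex_eq_iff cis.sel field_simps)

lemma orth_F:
  fixes \<Theta> :: "real set" and u :: "real \<Rightarrow> int" and D x :: real and r :: "nat \<Rightarrow> int"
  assumes fin: "finite \<Theta>"
    and uD: "\<forall>\<theta>\<in>\<Theta>. \<theta> * D = of_int (u \<theta>)"
    and hyp: "\<forall>\<theta>\<in>\<Theta>. \<exists>i<m. 0 < N i \<and> \<not> int (N i) dvd (u \<theta> + r i) \<and> \<not> int (N i) dvd (- u \<theta> + r i)"
  shows "(\<Sum>n\<in>PiE {..<m} (\<lambda>i. {..<N i}). complex_of_real (\<Sum>\<theta>\<in>\<Theta>. A \<theta> * cos (2 * pi * \<theta> * (x + (\<Sum>i<m. n i * (D / N i))))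
            + B \<theta> * sin (2 * pi * \<theta> * (x + (\<Sum>i<m. n i * (D / N i))))) * EE N m r n) = 0"
proof -
  define I where "I = PiE {..<m} (\<lambda>i. {..<N i})"
  define \<alpha> where "\<alpha> \<theta> = (complex_of_real (A \<theta>) - \<i> * complex_of_real (B \<theta>)) / 2" for \<theta>
  define \<beta> where "\<beta> \<theta> = (complex_of_real (A \<theta>) + \<i> * complex_of_real (B \<theta>)) / 2" for \<theta>
  have key: "cis (2 * pi * \<theta> * (x + (\<Sum>i<m. n i * (D / N i)))) = cis (2*pi*\<theta>*x) * EE N m (\<lambda>i. u \<theta>) n"
    "cis (- (2 * pi * \<theta> * (x + (\<Sum>i<m. n i * (D / N i))))) = cis (-(2*pi*\<theta>*x)) * EE N m (\<lambda>i. - u \<theta>) n"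
    if "\<theta> \<in> \<Theta>" for \<theta> n
  proof -
    have "2 * pi * \<theta> * (x + (\<Sum>i<m. n i * (D / N i))) = 2*pi*\<theta>*x + (\<Sum>i<m. 2*pi*(\<theta>*D)*n i/N i)"
      by (simp add: sum_distrib_left field_simps)
    also have "\<dots> = 2*pi*\<theta>*x + (\<Sum>i<m. 2*pi*(of_int (u \<theta>))*n i/N i)" using uD that by simp
    finally have e: "2 * pi * \<theta> * (x + (\<Sum>i<m. n i * (D / N i))) = 2*pi*\<theta>*x + (\<Sum>i<m. 2*pi*(of_int (u \<theta>))*n i/N i)" .
    show "cis (2 * pi * \<theta> * (x + (\<Sum>i<m. n i * (D / N i)))) = cis (2*pi*\<theta>*x) * EE N m (\<lambda>i. u \<theta>) n"
      unfolding e EE_const cis_mult by simp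
    have e2: "- (2 * pi * \<theta> * (x + (\<Sum>i<m. n i * (D / N i)))) = - (2*pi*\<theta>*x) + (\<Sum>i<m. 2*pi*(of_int (- u \<theta>))*n i/N i)"
      unfolding e by (simp add: sum_negf)
    show "cis (- (2 * pi * \<theta> * (x + (\<Sum>i<m. n i * (D / N i))))) = cis (-(2*pi*\<theta>*x)) * EE N m (\<lambda>i. - u \<theta>) n"
      unfolding e2 EE_const cis_mult by simp
  qed
  have "(\<Sum>n\<in>I. complex_of_real (\<Sum>\<theta>\<in>\<Theta>. A \<theta> * cos (2 * pi * \<theta> * (x + (\<Sum>i<m. n i * (D / N i))))
            + B \<theta> * sin (2 * pi * \<theta> * (x + (\<Sum>i<m. n i * (D / N i))))) * EE N m r n)
     = (\<Sum>n\<in>I. \<Sum>\<theta>\<in>\<Theta>. \<alpha> \<theta> * cis (2*pi*\<theta>*x) * EE N m (\<lambda>i. u \<theta> + r i) n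
                     + \<beta> \<theta> * cis (-(2*pi*\<theta>*x)) * EE N m (\<lambda>i. - u \<theta> + r i) n)"
  proof (rule sum.cong[OF refl])
    fix n assume "n \<in> I"
    show "complex_of_real (\<Sum>\<theta>\<in>\<Theta>. A \<theta> * cos (2 * pi * \<theta> * (x + (\<Sum>i<m. n i * (D / N i))))
            + B \<theta> * sin (2 * pi * \<theta> * (x + (\<Sum>i<m. n i * (D / N i))))) * EE N m r n
       = (\<Sum>\<theta>\<in>\<Theta>. \<alpha> \<theta> * cis (2*pi*\<theta>*x) * EE N m (\<lambda>i. u \<theta> + r i) n
                     + \<beta> \<theta> * cis (-(2*pi*\<theta>*x)) * EE N m (\<lambda>i. - u \<theta> + r i) n)"
      unfolding of_real_sum sum_distrib_right
    proof (rule sum.cong[OF refl])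
      fix \<theta> assume th: "\<theta> \<in> \<Theta>"
      show "complex_of_real (A \<theta> * cos (2 * pi * \<theta> * (x + (\<Sum>i<m. n i * (D / N i))))
            + B \<theta> * sin (2 * pi * \<theta> * (x + (\<Sum>i<m. n i * (D / N i))))) * EE N m r n =
         \<alpha> \<theta> * cis (2*pi*\<theta>*x) * EE N m (\<lambda>i. u \<theta> + r i) n
                     + \<beta> \<theta> * cis (-(2*pi*\<theta>*x)) * EE N m (\<lambda>i. - u \<theta> + r i) n"
        unfolding cos_sin_cis key[OF th] EE_add \<alpha>_def \<beta>_def by (simp add: algebra_simps)
    qed
  qed
  also have "\<dots> = (\<Sum>\<theta>\<in>\<Theta>. \<alpha> \<theta> * cis (2*pi*\<theta>*x) * (\<Sum>n\<in>I. EE N m (\<lambda>i. u \<theta> + r i) n)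
                     + \<beta> \<theta> * cis (-(2*pi*\<theta>*x)) * (\<Sum>n\<in>I. EE N m (\<lambda>i. - u \<theta> + r i) n))"
    by (subst sum.swap) (simp add: sum.distrib sum_distrib_left)
  also have "\<dots> = 0"
  proof (rule sum.neutral, rule ballI)
    fix \<theta> assume th: "\<theta> \<in> \<Theta>"
    then obtain i where i: "i < m" "0 < N i" "\<not> int (N i) dvd (u \<theta> + r i)" "\<not> int (N i) dvd (- u \<theta> + r i)"
      using hyp by blast
    have "(\<Sum>n\<in>I. EE N m (\<lambda>i. u \<theta> + r i) n) = 0"
      unfolding I_def by (rule sum_EE_shift[of i]) (use i in auto)
    moreover have "(\<Sum>n\<in>I. EE N m (\<lambda>i. - u \<theta> + r i) n) = 0"
      unfolding I_def by (rule sum_EE_shift[of i]) (use i in auto)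
    ultimately show "\<alpha> \<theta> * cis (2*pi*\<theta>*x) * (\<Sum>n\<in>I. EE N m (\<lambda>i. u \<theta> + r i) n)
                     + \<beta> \<theta> * cis (-(2*pi*\<theta>*x)) * (\<Sum>n\<in>I. EE N m (\<lambda>i. - u \<theta> + r i) n) = 0" by simp
  qed
  finally show ?thesis unfolding I_def .
qed



lemma islimpt_of_real:
  assumes "(\<xi>::real) islimpt U"
  shows "complex_of_real \<xi> islimpt (complex_of_real ` U)"
  unfolding islimpt_approachable
proof (intro allI impI)
  fix e :: real assume "0 < e"
  then obtain x where "x \<in> U" "x \<noteq> \<xi>" "dist x \<xi> < e" using assms islimpt_approachable by blast
  then show "\<exists>x'\<in>complex_of_real ` U. x' \<noteq> complex_of_real \<xi> \<and> dist x' (complex_of_real \<xi>) < e"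
    by (intro bexI[of _ "complex_of_real x"]) (auto simp: dist_of_real)
qed

lemma zeros_countable:
  fixes \<Theta> :: "real set" and A B :: "real \<Rightarrow> real" and F :: "real \<Rightarrow> real"
  assumes fin: "finite \<Theta>"
    and F: "\<And>x. F x = (\<Sum>\<theta>\<in>\<Theta>. A \<theta> * cos (2 * pi * \<theta> * x) + B \<theta> * sin (2 * pi * \<theta> * x))"
    and nz: "\<exists>x. F x \<noteq> 0"
  shows "countable {x. F x = 0}"
proof -
  define G where "G z = (\<Sum>\<theta>\<in>\<Theta>. complex_of_real (A \<theta>) * cos (2 * pi * complex_of_real \<theta> * z)
      + complex_of_real (B \<theta>) * sin (2 * pi * complex_of_real \<theta> * z))" for z
  have hol: "G holomorphic_on UNIV" unfolding G_def by (intro holomorphic_intros)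
  have GF: "G (complex_of_real x) = complex_of_real (F x)" for x
    unfolding G_def F of_real_sum
    by (intro sum.cong refl) (simp flip: cos_of_real sin_of_real)
  obtain x0 where x0: "F x0 \<noteq> 0" using nz by blast
  have fin_k: "finite ({x. F x = 0} \<inter> {-real k..real k})" for k :: nat
  proof (rule ccontr)
    assume inf: "infinite ({x. F x = 0} \<inter> {-real k..real k})"
    obtain \<xi> where \<xi>: "\<xi> \<in> {-real k..real k}" "\<xi> islimpt ({x. F x = 0} \<inter> {-real k..real k})"
      using Heine_Borel_imp_Bolzano_Weierstrass[OF compact_Icc inf] by blast
    have "G (complex_of_real x0) = 0"
    proof (rule analytic_continuation[OF hol open_UNIV connected_UNIV _ _ islimpt_of_real[OF \<xi>(2)]])
      fix z assume "z \<in> complex_of_real ` ({x. F x = 0} \<inter> {-real k..real k})"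
      then show "G z = 0" using GF by auto
    qed auto
    then show False using GF x0 by simp
  qed
  have "{x. F x = 0} = (\<Union>k::nat. {x. F x = 0} \<inter> {-real k..real k})"
  proof safe
    fix x assume "F x = 0"
    obtain k :: nat where "\<bar>x\<bar> \<le> real k" using real_arch_simple by blast
    then show "x \<in> (\<Union>k::nat. {x. F x = 0} \<inter> {-real k..real k})" using \<open>F x = 0\<close> by (auto simp: abs_le_iff intro!: exI[of _ k])
  qed
  also have "countable \<dots>" by (intro countable_UN) (auto intro: countable_finite[OF fin_k])
  finally show ?thesis .
qed



lemma periodic_int:
  fixes h :: "real \<Rightarrow> 'a"
  assumes per: "\<forall>x. h (x + P) = h x"
  shows "h (x + of_int k * P) = h x"
proof -
  have nat: "h (y + real n * P) = h y" for y n
    by (induction n) (simp_all add: algebra_simps per[rule_format, of "y + real _ * P", simplified algebra_simps])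
  show ?thesis
  proof (cases "k \<ge> 0")
    case True
    then show ?thesis using nat[of x "nat k"] by simp
  next
    case False
    then have "h (x + of_int k * P + real (nat (-k)) * P) = h (x + of_int k * P)" using nat by blast
    moreover have "x + of_int k * P + real (nat (-k)) * P = x" using False by (simp add: algebra_simps)
    ultimately show ?thesis by simp
  qed
qed

lemma periodic_integral:
  fixes h :: "real \<Rightarrow> real"
  assumes P: "P > 0" and per: "\<forall>x. h (x + P) = h x" and int: "\<And>a b. h integrable_on {a..b}"
  shows "integral {t..t+P} h = integral {0..P} h"
proof -
  define k where "k = \<lfloor>t / P\<rfloor>"
  define r where "r = t - of_int k * P"
  have r: "0 \<le> r" "r \<le> P"
  proof -
    have "of_int k \<le> t / P" "t / P < of_int k + 1" unfolding k_def by linarith+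
    then show "0 \<le> r" "r \<le> P" using P by (auto simp: r_def field_simps)
  qed
  have hk: "(h \<circ> (+) (of_int k * P)) = h" using periodic_int[OF per] by (auto simp: add.commute)
  have hP: "(h \<circ> (+) P) = h" using per by (auto simp: add.commute)
  have "integral {t..t+P} h = integral {r..r+P} (h \<circ> (+) (of_int k * P))"
    using integral_shift_Icc_real[of r "r+P" h "of_int k * P"] by (simp add: r_def algebra_simps)
  also have "\<dots> = integral {r..r+P} h" using hk by simp
  also have "\<dots> = integral {r..P} h + integral {P..P+r} h"
    using Henstock_Kurzweil_Integration.integral_combine[where a=r and c=P and b="r+P" and f=h] r P int by (simp add: add.commute)
  also have "integral {P..P+r} h = integral {0..r} (h \<circ> (+) P)"
    using integral_shift_Icc_real[of 0 r h P] by (simp add: add.commute)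
  also have "\<dots> = integral {0..r} h" using hP by simp
  also have "integral {r..P} h + integral {0..r} h = integral {0..P} h"
    using Henstock_Kurzweil_Integration.integral_combine[where a=0 and c=r and b=P and f=h] r int by simp
  finally show ?thesis .
qed

lemma indicator_has_integral_Icc:
  assumes "S \<in> sets lebesgue"
  shows "(indicator S has_integral measure lebesgue (S \<inter> {a..b})) {a..(b::real)}"
proof -
  have "{a..b} \<inter> S \<in> lmeasurable" using assms by (intro fmeasurable_Int_fmeasurable) auto
  then have "S \<inter> {a..b} \<in> lmeasurable" by (simp add: Int_commute)
  then have "(indicator (S \<inter> {a..b}) has_integral measure lebesgue (S \<inter> {a..b})) UNIV"
    using lmeasurable_iff_has_integral by blast
  moreover have "indicator (S \<inter> {a..b}) = (\<lambda>x. if x \<in> {a..b} then indicator S x else (0::real))"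
    by (auto simp: indicator_def)
  ultimately show ?thesis using has_integral_restrict_UNIV by metis
qed

lemma shift_measure:
  fixes F :: "real \<Rightarrow> real"
  assumes P: "P > 0" and per: "\<forall>x. F (x + P) = F x" and cont: "continuous_on UNIV F"
  shows "measure lebesgue {x\<in>{0..P}. F (x + t) > 0} = measure lebesgue {x\<in>{0..P}. F x > 0}"
proof -
  define S where "S = {y. F y > 0}"
  have oS: "open S" unfolding S_def using cont using open_Collect_less[of "\<lambda>_. 0" F] by (simp add: continuous_on_const)
  then have mS: "S \<in> sets lebesgue" by (simp add: borel_open)
  define h :: "real \<Rightarrow> real" where "h = indicator S"
  have int: "h integrable_on {a..b}" for a b
    using indicator_has_integral_Icc[OF mS] unfolding h_def by blast
  have hper: "\<forall>x. h (x + P) = h x" using per by (simp add: h_def S_def indicator_def)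
  have S': "(\<lambda>x. x + t) -` S \<in> sets lebesgue"
  proof -
    have "open ((\<lambda>x. x + t) -` S)" using oS by (intro open_vimage) (auto intro: continuous_intros)
    then show ?thesis by (simp add: borel_open)
  qed
  have e1: "{x\<in>{0..P}. F (x + t) > 0} = ((\<lambda>x. x + t) -` S) \<inter> {0..P}" by (auto simp: S_def)
  have e2: "{x\<in>{0..P}. F x > 0} = S \<inter> {0..P}" by (auto simp: S_def)
  have "measure lebesgue {x\<in>{0..P}. F (x + t) > 0} = integral {0..P} (indicator ((\<lambda>x. x + t) -` S))"
    unfolding e1 using indicator_has_integral_Icc[OF S', of 0 P] by (metis integral_unique)
  also have "indicator ((\<lambda>x. x + t) -` S) = (h \<circ> (+) t)" by (auto simp: h_def indicator_def add.commute)
  also have "integral {0..P} (h \<circ> (+) t) = integral {t..t+P} h"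
    using integral_shift_Icc_real[of 0 P h t] by (simp add: add.commute)
  also have "\<dots> = integral {0..P} h" by (rule periodic_integral[OF P hper int])
  also have "\<dots> = measure lebesgue {x\<in>{0..P}. F x > 0}"
    unfolding e2 h_def using indicator_has_integral_Icc[OF mS, of 0 P] by (metis integral_unique)
  finally show ?thesis .
qed



lemma countable_negligible:
  assumes "countable (A::real set)" shows "negligible A"
proof -
  have "A = \<Union> ((\<lambda>x. {x}) ` A)" by auto
  also have "negligible \<dots>" using assms by (intro negligible_countable_Union) auto
  finally show ?thesis .
qed

lemma averaging:
  fixes F :: "real \<Rightarrow> real" and T :: "'n set" and t :: "'n \<Rightarrow> real"
  assumes P: "P > 0" and per: "\<forall>x. F (x + P) = F x" and cont: "continuous_on UNIV F"
    and fT: "finite T" and Bd: "countable Bd"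
    and cnt: "\<And>x. x \<notin> Bd \<Longrightarrow> c \<le> card {j\<in>T. F (x + t j) > 0}"
  shows "real c * P \<le> real (card T) * measure lebesgue {x\<in>{0..P}. F x > 0}"
proof -
  define S where "S = {y. F y > 0}"
  have oS: "open S" unfolding S_def using open_Collect_less[of "\<lambda>_. 0" F] cont by (simp add: continuous_on_const)
  define A where "A j = (\<lambda>x. x + t j) -` S" for j
  have mA: "A j \<in> sets lebesgue" for j
  proof -
    have "open (A j)" unfolding A_def using oS by (intro open_vimage) (auto intro: continuous_intros)
    then show ?thesis by (simp add: borel_open)
  qed
  have mAj: "measure lebesgue (A j \<inter> {0..P}) = measure lebesgue {x\<in>{0..P}. F x > 0}" for j
  proof -
    have "A j \<inter> {0..P} = {x\<in>{0..P}. F (x + t j) > 0}" by (auto simp: A_def S_def)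
    then show ?thesis using shift_measure[OF P per cont, of "t j"] by simp
  qed
  define f where "f x = (\<Sum>j\<in>T. indicator (A j) x :: real)" for x
  have fint: "(f has_integral (\<Sum>j\<in>T. measure lebesgue (A j \<inter> {0..P}))) {0..P}"
    unfolding f_def by (rule has_integral_sum[OF fT]) (rule indicator_has_integral_Icc[OF mA])
  have fcard: "f x = real (card {j\<in>T. F (x + t j) > 0})" for x
  proof -
    have "f x = (\<Sum>j\<in>T. if F (x + t j) > 0 then 1 else 0)"
      unfolding f_def by (intro sum.cong refl) (auto simp: A_def S_def indicator_def)
    also have "\<dots> = real (card {j\<in>T. F (x + t j) > 0})"
    proof -
      have "T \<inter> {j. 0 < F (x + t j)} = {j\<in>T. 0 < F (x + t j)}" by blast
      then show ?thesis using fT by (simp add: sum.If_cases)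
    qed
    finally show ?thesis .
  qed
  define f' where "f' x = (if x \<in> Bd then real c else f x)" for x
  have f'int: "(f' has_integral (\<Sum>j\<in>T. measure lebesgue (A j \<inter> {0..P}))) {0..P}"
    by (rule has_integral_spike[OF countable_negligible[OF Bd] _ fint]) (auto simp: f'_def)
  have cint: "((\<lambda>x. real c) has_integral (real c * P)) {0..P}"
    using has_integral_const_real[of "real c" 0 P] P by (simp add: mult.commute)
  have "real c * P \<le> (\<Sum>j\<in>T. measure lebesgue (A j \<inter> {0..P}))"
    by (rule has_integral_le[OF cint f'int]) (auto simp: f'_def fcard cnt)
  also have "\<dots> = real (card T) * measure lebesgue {x\<in>{0..P}. F x > 0}"
    by (simp add: mAj)
  finally show ?thesis .
qed



lemma common_denom:
  assumes "finite \<Theta>" "\<Theta> \<subseteq> \<rat>"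
  shows "\<exists>D::nat. D > 0 \<and> (\<forall>\<theta>\<in>\<Theta>. \<theta> * real D \<in> \<int>)"
  using assms
proof (induction \<Theta> rule: finite_induct)
  case empty
  then show ?case by (intro exI[of _ 1]) auto
next
  case (insert \<theta> \<Theta>)
  then obtain D :: nat where D: "D > 0" "\<forall>\<phi>\<in>\<Theta>. \<phi> * real D \<in> \<int>" by auto
  from insert.prems have "\<theta> \<in> \<rat>" by auto
  then obtain p q :: int where pq: "q > 0" "\<theta> = of_int p / of_int q" by (metis Rats_cases')
  define D' where "D' = D * nat q"
  have "D' > 0" using D pq by (simp add: D'_def)
  moreover have "\<forall>\<phi>\<in>insert \<theta> \<Theta>. \<phi> * real D' \<in> \<int>"
  proof
    fix \<phi> assume "\<phi> \<in> insert \<theta> \<Theta>"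
    then show "\<phi> * real D' \<in> \<int>"
    proof
      assume "\<phi> = \<theta>"
      then have "\<phi> * real D' = of_int (p * int D)" using pq by (simp add: D'_def field_simps)
      then show ?thesis by simp
    next
      assume "\<phi> \<in> \<Theta>"
      then have "\<phi> * real D \<in> \<int>" using D by auto
      moreover have "\<phi> * real D' = (\<phi> * real D) * of_int q" using pq by (simp add: D'_def)
      ultimately show ?thesis by (metis Ints_mult Ints_of_int)
    qed
  qed
  ultimately show ?case by blast
qed

lemma F_period:
  fixes \<Theta> :: "real set" and F :: "real \<Rightarrow> real" and u :: "real \<Rightarrow> int"
  assumes F: "\<And>x. F x = (\<Sum>\<theta>\<in>\<Theta>. A \<theta> * cos (2 * pi * \<theta> * x) + B \<theta> * sin (2 * pi * \<theta> * x))"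
    and uD: "\<forall>\<theta>\<in>\<Theta>. \<theta> * D = of_int (u \<theta>)"
  shows "F (x + D) = F x"
  unfolding F
proof (intro sum.cong refl)
  fix \<theta> assume th: "\<theta> \<in> \<Theta>"
  have "2 * pi * \<theta> * (x + D) = 2 * pi * \<theta> * x + (2 * pi) * of_int (u \<theta>)"
  proof -
    have "2 * pi * \<theta> * (x + D) = 2 * pi * \<theta> * x + (2 * pi) * (\<theta> * D)" by (simp add: algebra_simps)
    then show ?thesis using uD th by simp
  qed
  then show "A \<theta> * cos (2 * pi * \<theta> * (x + D)) + B \<theta> * sin (2 * pi * \<theta> * (x + D)) =
             A \<theta> * cos (2 * pi * \<theta> * x) + B \<theta> * sin (2 * pi * \<theta> * x)"
    by (simp add: cos_add sin_add)
qed



lemma main_plus: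
  fixes \<Theta> :: "real set" and m :: nat and a b :: "nat \<Rightarrow> real"
    and A B :: "real \<Rightarrow> real" and F :: "real \<Rightarrow> real" and P :: real
  assumes fin: "finite \<Theta>" and rat: "\<Theta> \<subseteq> \<rat>" and pos: "\<forall>\<theta>\<in>\<Theta>. \<theta> > 0"
    and ab: "\<forall>i<m. 0 < a i \<and> a i \<le> b i"
    and cov: "\<Theta> \<subseteq> (\<Union>i<m. {a i..b i})"
    and F: "\<And>x. F x = (\<Sum>\<theta>\<in>\<Theta>. A \<theta> * cos (2 * pi * \<theta> * x) + B \<theta> * sin (2 * pi * \<theta> * x))"
    and nz: "\<exists>x. F x \<noteq> 0"
    and P: "P > 0" and per: "\<forall>x. F (x + P) = F x"
  shows "(\<Prod>i<m. 1 / (1 + b i / a i)) * P \<le> measure lebesgue {x\<in>{0..P}. F x > 0}"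
proof -
  obtain D0 :: nat where D0: "D0 > 0" "\<forall>\<theta>\<in>\<Theta>. \<theta> * real D0 \<in> \<int>"
    using common_denom[OF fin rat] by blast
  define D where "D = real D0"
  define u where "u \<theta> = \<lfloor>\<theta> * D\<rfloor>" for \<theta>
  have uD: "\<forall>\<theta>\<in>\<Theta>. \<theta> * D = of_int (u \<theta>)"
    using D0(2) unfolding u_def D_def by (auto elim!: Ints_cases)
  have Dpos: "D > 0" using D0 by (simp add: D_def)
  have upos: "u \<theta> \<ge> 1" if "\<theta> \<in> \<Theta>" for \<theta>
  proof -
    have "of_int (u \<theta>) > (0::real)" using uD pos that Dpos by (metis mult_pos_pos)
    then show ?thesis by simp
  qed
  define Th where "Th i = {\<theta>\<in>\<Theta>. a i \<le> \<theta> \<and> \<theta> \<le> b i}" for i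
  have finTh: "finite (Th i)" for i using fin by (simp add: Th_def)
  define lo where "lo i = Min (u ` Th i)" for i
  define hi where "hi i = Max (u ` Th i)" for i
  define d where "d i = (if Th i = {} then 1 else nat (lo i))" for i
  define N where "N i = (if Th i = {} then 1 else nat (lo i + hi i))" for i
  have lohi: "lo i \<le> u \<theta> \<and> u \<theta> \<le> hi i" if "\<theta> \<in> Th i" for i \<theta>
    using that finTh by (auto simp: lo_def hi_def)
  have lo_ex: "\<exists>\<theta>\<in>Th i. lo i = u \<theta>" if "Th i \<noteq> {}" for i
  proof -
    have "Min (u ` Th i) \<in> u ` Th i" using that finTh[of i] by (intro Min_in) auto
    then show ?thesis by (auto simp: lo_def)
  qed
  have hi_ex: "\<exists>\<theta>\<in>Th i. hi i = u \<theta>" if "Th i \<noteq> {}" for i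
  proof -
    have "Max (u ` Th i) \<in> u ` Th i" using that finTh[of i] by (intro Max_in) auto
    then show ?thesis by (auto simp: hi_def)
  qed
  have lo1: "lo i \<ge> 1" if "Th i \<noteq> {}" for i
    using lo_ex[OF that] upos by (auto simp: Th_def)
  have hi1: "hi i \<ge> 1" if "Th i \<noteq> {}" for i
    using hi_ex[OF that] upos by (auto simp: Th_def)
  have dN: "\<forall>i<m. 0 < d i \<and> d i \<le> N i"
  proof (intro allI impI)
    fix i assume "i < m"
    show "0 < d i \<and> d i \<le> N i"
    proof (cases "Th i = {}")
      case False
      then show ?thesis using lo1[OF False] hi1[OF False] by (simp add: d_def N_def nat_mono)
    qed (simp add: d_def N_def)
  qed
  have ratio: "1 / (1 + b i / a i) \<le> real (d i) / real (N i)" if "i < m" for i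
  proof (cases "Th i = {}")
    case True
    have "0 < b i / a i" using ab that by auto
    then show ?thesis using True by (simp add: d_def N_def)
  next
    case False
    obtain \<theta>1 where t1: "\<theta>1 \<in> Th i" "lo i = u \<theta>1" using lo_ex[OF False] by blast
    obtain \<theta>2 where t2: "\<theta>2 \<in> Th i" "hi i = u \<theta>2" using hi_ex[OF False] by blast
    have ai: "0 < a i" "a i \<le> \<theta>1" "\<theta>2 \<le> b i" using ab that t1 t2 by (auto simp: Th_def)
    have "\<theta>1 \<in> \<Theta>" "\<theta>2 \<in> \<Theta>" using t1 t2 by (auto simp: Th_def)
    then have l: "real_of_int (lo i) = \<theta>1 * D" and h: "real_of_int (hi i) = \<theta>2 * D"
      using uD t1 t2 by auto
    have dd: "real (d i) = \<theta>1 * D" "real (N i) = \<theta>1 * D + \<theta>2 * D"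
      using False lo1[OF False] hi1[OF False] l h by (auto simp: d_def N_def)
    have "1 / (1 + b i / a i) = a i / (a i + b i)" using ai by (simp add: field_simps)
    also have "\<dots> \<le> \<theta>1 / (\<theta>1 + \<theta>2)"
    proof -
      have p: "0 < \<theta>1" "0 < \<theta>2" using \<open>\<theta>1 \<in> \<Theta>\<close> \<open>\<theta>2 \<in> \<Theta>\<close> pos by auto
      have "a i * \<theta>2 \<le> \<theta>1 * b i" using ai p by (meson less_le_trans mult_mono less_imp_le)
      then show ?thesis using ai p by (simp add: field_simps)
    qed
    also have "\<dots> = real (d i) / real (N i)"
    proof -
      have "\<theta>1 * D + \<theta>2 * D = (\<theta>1 + \<theta>2) * D" by (simp add: distrib_right)
      then show ?thesis using dd Dpos by simp
    qed
    finally show ?thesis .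
  qed
  have ratio_prod: "(\<Prod>i<m. 1 / (1 + b i / a i)) \<le> (\<Prod>i<m. real (d i) / real (N i))"
  proof (rule prod_mono)
    fix i assume i: "i \<in> {..<m}"
    have "0 < b i / a i" using ab i by auto
    then show "0 \<le> 1 / (1 + b i / a i) \<and> 1 / (1 + b i / a i) \<le> real (d i) / real (N i)"
      using ratio i by auto
  qed
  define T where "T = PiE {..<m} (\<lambda>i. {..<N i})"
  define t where "t n = (\<Sum>i<m. real (n i) * (D / real (N i)))" for n :: "nat \<Rightarrow> nat"
  have fT: "finite T" unfolding T_def by (intro finite_PiE) auto
  have Fc: "continuous_on UNIV F"
  proof -
    have e: "F = (\<lambda>x. \<Sum>\<theta>\<in>\<Theta>. A \<theta> * cos (2 * pi * \<theta> * x) + B \<theta> * sin (2 * pi * \<theta> * x))"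
      using F by (intro ext) simp
    show ?thesis unfolding e by (intro continuous_intros)
  qed
  have Z: "countable {x. F x = 0}" by (rule zeros_countable[OF fin F nz])
  define Bd where "Bd = (\<Union>n\<in>T. (\<lambda>z. z - t n) ` {x. F x = 0})"
  have cBd: "countable Bd" unfolding Bd_def using fT Z by (intro countable_UN countable_image) (auto intro: countable_finite)
  have hyp: "\<forall>\<theta>\<in>\<Theta>. \<exists>i<m. 0 < N i \<and> \<not> int (N i) dvd (u \<theta> + r i) \<and> \<not> int (N i) dvd (- u \<theta> + r i)"
    if r: "\<forall>i<m. \<bar>r i\<bar> < int (d i)" for r
  proof
    fix \<theta> assume th: "\<theta> \<in> \<Theta>"
    then obtain i where i: "i < m" "\<theta> \<in> {a i..b i}" using cov by blast
    then have thi: "\<theta> \<in> Th i" using th by (simp add: Th_def)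
    then have ne: "Th i \<noteq> {}" by auto
    have lh: "lo i \<le> u \<theta>" "u \<theta> \<le> hi i" using lohi[OF thi] by auto
    have l1: "lo i \<ge> 1" "hi i \<ge> 1" using lo1[OF ne] hi1[OF ne] by auto
    have "\<bar>r i\<bar> < int (d i)" using r i(1) by blast
    then have ri: "\<bar>r i\<bar> < lo i" using ne l1 by (simp add: d_def)
    have Ni: "int (N i) = lo i + hi i" using ne l1 by (simp add: N_def)
    have nd: "\<not> int (N i) dvd z" if "0 < \<bar>z\<bar>" "\<bar>z\<bar> < int (N i)" for z
    proof
      assume "int (N i) dvd z"
      then have "int (N i) dvd \<bar>z\<bar>" by simp
      then have "int (N i) \<le> \<bar>z\<bar>" using that(1) by (rule zdvd_imp_le)
      then show False using that(2) by simp
    qed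
    have "0 < N i" using Ni l1 by linarith
    moreover have "\<not> int (N i) dvd (u \<theta> + r i)" using lh ri Ni by (intro nd) auto
    moreover have "\<not> int (N i) dvd (- u \<theta> + r i)" using lh ri Ni by (intro nd) auto
    ultimately show "\<exists>i<m. 0 < N i \<and> \<not> int (N i) dvd (u \<theta> + r i) \<and> \<not> int (N i) dvd (- u \<theta> + r i)"
      using i(1) by blast
  qed
  have cnt: "(\<Prod>i<m. d i) \<le> card {n\<in>T. F (x + t n) > 0}" if x: "x \<notin> Bd" for x
    unfolding T_def
  proof (rule core[OF dN])
    show "\<forall>n\<in>PiE {..<m} (\<lambda>i. {..<N i}). F (x + t n) \<noteq> 0"
    proof
      fix n assume n: "n \<in> PiE {..<m} (\<lambda>i. {..<N i})"
      show "F (x + t n) \<noteq> 0"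
      proof
        assume "F (x + t n) = 0"
        then have "x \<in> (\<lambda>z. z - t n) ` {x. F x = 0}" by (intro image_eqI[of _ _ "x + t n"]) auto
        then show False using x n by (auto simp: Bd_def T_def)
      qed
    qed
    show "\<forall>k\<in>PiE {..<m} (\<lambda>i. {..<d i}). \<forall>k'\<in>PiE {..<m} (\<lambda>i. {..<d i}).
       (\<Sum>n\<in>PiE {..<m} (\<lambda>i. {..<N i}). complex_of_real (F (x + t n)) *
          (EE N m (\<lambda>i. int (k i)) n * cnj (EE N m (\<lambda>i. int (k' i)) n))) = 0"
    proof (intro ballI)
      fix k k' assume k: "k \<in> PiE {..<m} (\<lambda>i. {..<d i})" and k': "k' \<in> PiE {..<m} (\<lambda>i. {..<d i})"
      define r where "r = (\<lambda>i. int (k i) - int (k' i))"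
      have rb: "\<forall>i<m. \<bar>r i\<bar> < int (d i)"
      proof (intro allI impI)
        fix i assume "i < m"
        then have "k i < d i" "k' i < d i" using k k' by (auto simp: PiE_iff)
        then show "\<bar>r i\<bar> < int (d i)" by (simp add: r_def)
      qed
      have "(\<Sum>n\<in>PiE {..<m} (\<lambda>i. {..<N i}). complex_of_real (F (x + t n)) *
          (EE N m (\<lambda>i. int (k i)) n * cnj (EE N m (\<lambda>i. int (k' i)) n)))
        = (\<Sum>n\<in>PiE {..<m} (\<lambda>i. {..<N i}). complex_of_real (\<Sum>\<theta>\<in>\<Theta>. A \<theta> * cos (2 * pi * \<theta> * (x + (\<Sum>i<m. n i * (D / N i))))
            + B \<theta> * sin (2 * pi * \<theta> * (x + (\<Sum>i<m. n i * (D / N i))))) * EE N m r n)"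
        by (simp add: EE_mult_cnj F t_def r_def)
      also have "\<dots> = 0" by (rule orth_F[OF fin uD hyp[OF rb]])
      finally show "(\<Sum>n\<in>PiE {..<m} (\<lambda>i. {..<N i}). complex_of_real (F (x + t n)) *
          (EE N m (\<lambda>i. int (k i)) n * cnj (EE N m (\<lambda>i. int (k' i)) n))) = 0" .
    qed
  qed
  have avg: "real (\<Prod>i<m. d i) * P \<le> real (card T) * measure lebesgue {x\<in>{0..P}. F x > 0}"
    by (rule averaging[OF P per Fc fT cBd cnt])
  have cT: "card T = (\<Prod>i<m. N i)" unfolding T_def by (simp add: card_PiE)
  have Npos: "real (\<Prod>i<m. N i) > 0" 
  proof -
    have "\<forall>i\<in>{..<m}. 0 < N i" using dN by (meson lessThan_iff less_le_trans)
    then have "0 < (\<Prod>i<m. N i)" by (simp add: prod_pos)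
    then show ?thesis by (simp only: of_nat_0_less_iff)
  qed
  have "(\<Prod>i<m. 1 / (1 + b i / a i)) * P \<le> (\<Prod>i<m. real (d i) / real (N i)) * P"
    using ratio_prod P by (simp add: mult_right_mono)
  also have "\<dots> = real (\<Prod>i<m. d i) * P / real (\<Prod>i<m. N i)"
    by (simp add: prod_dividef)
  also have "\<dots> \<le> measure lebesgue {x\<in>{0..P}. F x > 0}"
    using avg cT Npos by (simp add: divide_le_eq mult.commute)
  finally show ?thesis .
qed

theorem theorem3:
  fixes \<Theta> :: "real set" and m :: nat and a b :: "nat \<Rightarrow> real"
    and A B :: "real \<Rightarrow> real" and F :: "real \<Rightarrow> real"
  assumes "finite \<Theta>" and "\<Theta> \<subseteq> \<rat>" and "\<forall>\<theta>\<in>\<Theta>. \<theta> > 0"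
    and "\<forall>i<m. 0 < a i \<and> a i \<le> b i"
    and "\<Theta> \<subseteq> (\<Union>i<m. {a i..b i})"
    and "\<And>x. F x = (\<Sum>\<theta>\<in>\<Theta>. A \<theta> * cos (2 * pi * \<theta> * x) + B \<theta> * sin (2 * pi * \<theta> * x))"
    and "\<exists>x. F x \<noteq> 0"
  shows "min (rho_plus F) (rho_minus F) \<ge> (\<Prod>i<m. 1 / (1 + b i / a i))"
proof -
  note asm = assms
  define c where "c = (\<Prod>i<m. 1 / (1 + b i / a i))"
  obtain D0 :: nat where D0: "D0 > 0" "\<forall>\<theta>\<in>\<Theta>. \<theta> * real D0 \<in> \<int>"
    using common_denom[OF assms(1,2)] by blast
  define u where "u \<theta> = \<lfloor>\<theta> * real D0\<rfloor>" for \<theta>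
  have uD: "\<forall>\<theta>\<in>\<Theta>. \<theta> * real D0 = of_int (u \<theta>)"
    using D0(2) unfolding u_def by (auto elim!: Ints_cases)
  have "is_period F (real D0)"
    unfolding is_period_def using D0(1) F_period[OF assms(6) uD] by simp
  then have per: "is_period F (some_period F)"
    unfolding some_period_def by (rule someI)
  define P where "P = some_period F"
  have P: "P > 0" and perF: "\<forall>x. F (x + P) = F x" using per by (auto simp: is_period_def P_def)
  have plus: "c * P \<le> measure lebesgue {x\<in>{0..P}. F x > 0}"
    unfolding c_def by (rule main_plus[OF assms P perF])
  have Fm: "\<And>x. - F x = (\<Sum>\<theta>\<in>\<Theta>. (- A \<theta>) * cos (2 * pi * \<theta> * x) + (- B \<theta>) * sin (2 * pi * \<theta> * x))"
    using assms(6) by (simp add: sum_negf[symmetric])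
  have nzm: "\<exists>x. - F x \<noteq> 0" using assms(7) by simp
  have perm: "\<forall>x. - F (x + P) = - F x" using perF by simp
  have "c * P \<le> measure lebesgue {x\<in>{0..P}. - F x > 0}"
    unfolding c_def by (rule main_plus[OF assms(1-5) Fm nzm P perm])
  then have minus: "c * P \<le> measure lebesgue {x\<in>{0..P}. F x < 0}" by simp
  have "c \<le> rho_plus F" unfolding rho_plus_def P_def[symmetric] using plus P by (simp add: le_divide_eq)
  moreover have "c \<le> rho_minus F" unfolding rho_minus_def P_def[symmetric] using minus P by (simp add: le_divide_eq)
  ultimately show ?thesis by (simp add: c_def)
qed


end
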